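(* Let $A\subseteq B$ be commutative semirings ($A$ a subsemiring of $B$), let $S=A[x_1,\dots,x_n]$, and let $\rho$ be a prime congruence on $B$. Call a subset $Y\subseteq B^n$ a $\rho$-algebraic variety (over $A$) if $Y=Z_\rho(T)(B)$ for some non-empty $T\subseteq S\times S$. Then: (1) the union of two $\rho$-algebraic varieties is a $\rho$-algebraic variety; (2) the intersection of any family of $\rho$-algebraic varieties is a $\rho$-algebraic variety; (3) $\emptyset$ and $B^n$ are $\rho$-algebraic varieties.
   Context: A (commutative) semiring is a set with operations $+,\cdot$ such that $(A,+)$ is a commutative monoid with identity $0$, $(A,\cdot)$ a commutative monoid with identity $1\neq0$, multiplication distributes over addition and $0a=0$. A congruence on a semiring $B$ is an equivalence relation $\rho\subseteq B\times B$ with $(a,b),(c,d)\in\rho\Rightarrow(a+c,b+d),(ac,bd)\in\rho$. The twisted product is $(a,b)\ast(c,d)=(ac+bd,ad+bc)$; a congruence $\rho\neq B\times B$ is prime if $(a,b)\ast(c,d)\in\rho$ implies $(a,b)\in\rho$ or $(c,d)\in\rho$. $S=A[x_1,\dots,x_n]$ is the polynomial semiring over $A$; for $P\in B^n$ and $f\in S$, $f(P)\in B$ is the evaluation. For non-empty $T\subseteq S\times S$, $Z_\rho(T)(B)=\{P\in B^n:\ (f(P),g(P))\in\rho\ \text{for all}\ (f,g)\in T\}$. *)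

theory Defs
  imports "HOL-Library.Poly_Mapping"
begin

text \<open>The semiring B is the type 'b (class comm_semiring_1, which includes 0 \<noteq> 1);
 the subsemiring A is a subset of it.\<close>

definition subsemiring :: "'b::comm_semiring_1 set \<Rightarrow> bool" where
  "subsemiring A \<longleftrightarrow> 0 \<in> A \<and> 1 \<in> A \<and> (\<forall>a\<in>A. \<forall>b\<in>A. a + b \<in> A \<and> a * b \<in> A)"

definition semiring_congruence :: "('b::comm_semiring_1 \<times> 'b) set \<Rightarrow> bool" where
  "semiring_congruence \<rho> \<longleftrightarrow> equiv UNIV \<rho> \<and>
     (\<forall>a b c d. (a, b) \<in> \<rho> \<longrightarrow> (c, d) \<in> \<rho> \<longrightarrow> (a + c, b + d) \<in> \<rho> \<and> (a * c, b * d) \<in> \<rho>)"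

definition twisted_prod :: "'b::comm_semiring_1 \<times> 'b \<Rightarrow> 'b \<times> 'b \<Rightarrow> 'b \<times> 'b" where
  "twisted_prod p q = (fst p * fst q + snd p * snd q, fst p * snd q + snd p * fst q)"

definition prime_congruence :: "('b::comm_semiring_1 \<times> 'b) set \<Rightarrow> bool" where
  "prime_congruence \<rho> \<longleftrightarrow> semiring_congruence \<rho> \<and> \<rho> \<noteq> UNIV \<and>
     (\<forall>p q. twisted_prod p q \<in> \<rho> \<longrightarrow> p \<in> \<rho> \<or> q \<in> \<rho>)"

text \<open>Polynomials in variables x_0,...,x_(n-1): finitely supported maps from monomials
 (finitely supported exponent vectors) to coefficients.\<close>

type_synonym 'b mpoly = "(nat \<Rightarrow>\<^sub>0 nat) \<Rightarrow>\<^sub>0 'b"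

definition polys :: "'b::comm_semiring_1 set \<Rightarrow> nat \<Rightarrow> 'b mpoly set" where
  "polys A n = {f::(nat \<Rightarrow>\<^sub>0 nat) \<Rightarrow>\<^sub>0 'b. \<forall>m \<in> Poly_Mapping.keys f. Poly_Mapping.lookup f m \<in> A \<and> Poly_Mapping.keys m \<subseteq> {..<n}}"

text \<open>Points of B^n: functions nat \<Rightarrow> 'b vanishing outside {..<n}.\<close>
definition points :: "nat \<Rightarrow> (nat \<Rightarrow> 'b::comm_semiring_1) set" where
  "points n = {P. \<forall>i\<ge>n. P i = 0}"

definition eval_poly :: "'b::comm_semiring_1 mpoly \<Rightarrow> (nat \<Rightarrow> 'b) \<Rightarrow> 'b" where
  "eval_poly f P = (\<Sum>m\<in>Poly_Mapping.keys f. Poly_Mapping.lookup f m * (\<Prod>i\<in>Poly_Mapping.keys m. P i ^ Poly_Mapping.lookup m i))"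

definition Z_rho :: "('b::comm_semiring_1 \<times> 'b) set \<Rightarrow> nat \<Rightarrow> ('b mpoly \<times> 'b mpoly) set \<Rightarrow> (nat \<Rightarrow> 'b) set" where
  "Z_rho \<rho> n T = {P \<in> points n. \<forall>(f, g) \<in> T. (eval_poly f P, eval_poly g P) \<in> \<rho>}"

definition rho_variety :: "'b::comm_semiring_1 set \<Rightarrow> ('b \<times> 'b) set \<Rightarrow> nat \<Rightarrow> (nat \<Rightarrow> 'b) set \<Rightarrow> bool" where
  "rho_variety A \<rho> n Y \<longleftrightarrow> (\<exists>T. T \<noteq> {} \<and> T \<subseteq> polys A n \<times> polys A n \<and> Y = Z_rho \<rho> n T)"

end

theory Submission
  imports Defs
begin

definition mon :: "(nat \<Rightarrow> 'b::comm_semiring_1) \<Rightarrow> (nat \<Rightarrow>\<^sub>0 nat) \<Rightarrow> 'b" where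
  "mon P m = (\<Prod>i\<in>Poly_Mapping.keys m. P i ^ Poly_Mapping.lookup m i)"

lemma mon_ext: "finite K \<Longrightarrow> Poly_Mapping.keys m \<subseteq> K \<Longrightarrow>
   mon P m = (\<Prod>i\<in>K. P i ^ Poly_Mapping.lookup m i)"
  unfolding mon_def
  by (rule prod.mono_neutral_left) (auto simp: in_keys_iff)

lemma mon_add: "mon P (a + b) = mon P a * mon P b"
proof -
  let ?K = "Poly_Mapping.keys a \<union> Poly_Mapping.keys b"
  have "mon P (a + b) = (\<Prod>i\<in>?K. P i ^ Poly_Mapping.lookup (a+b) i)"
    by (rule mon_ext) (auto simp: keys_add)
  also have "\<dots> = (\<Prod>i\<in>?K. P i ^ Poly_Mapping.lookup a i) * (\<Prod>i\<in>?K. P i ^ Poly_Mapping.lookup b i)"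
    by (simp add: lookup_add power_add prod.distrib)
  also have "\<dots> = mon P a * mon P b"
    using mon_ext[of ?K a P] mon_ext[of ?K b P] by simp
  finally show ?thesis .
qed

lemma eval_mon: "eval_poly f P = (\<Sum>m\<in>Poly_Mapping.keys f. Poly_Mapping.lookup f m * mon P m)"
  unfolding eval_poly_def mon_def ..

lemma eval_add: "eval_poly (f + g) P = eval_poly f P + eval_poly g P"
  unfolding eval_mon
  by (rule setsum_keys_plus_distrib) (auto simp: distrib_right)

lemma eval_zero: "eval_poly 0 P = 0"
  by (simp add: eval_poly_def)

lemma eval_single: "eval_poly (Poly_Mapping.single m c) P = c * mon P m"
  by (simp add: eval_mon)

lemma eval_sum: "eval_poly (sum F S) P = (\<Sum>x\<in>S. eval_poly (F x) P)"
  by (induction S rule: infinite_finite_induct) (auto simp: eval_zero eval_add)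

lemma decomp: "f = (\<Sum>m\<in>Poly_Mapping.keys f. Poly_Mapping.single m (Poly_Mapping.lookup f m))"
proof (rule poly_mapping_eqI)
  fix k
  show "Poly_Mapping.lookup f k = Poly_Mapping.lookup (\<Sum>m\<in>Poly_Mapping.keys f. Poly_Mapping.single m (Poly_Mapping.lookup f m)) k"
    by (simp add: lookup_sum lookup_single when_def in_keys_iff sum.delta')
qed

lemma eval_mult: "eval_poly ((f::'b::comm_semiring_1 mpoly) * g) P = eval_poly f P * eval_poly g P"
proof -
  have "f * g = (\<Sum>a\<in>Poly_Mapping.keys f. Poly_Mapping.single a (Poly_Mapping.lookup f a)) *
     (\<Sum>b\<in>Poly_Mapping.keys g. Poly_Mapping.single b (Poly_Mapping.lookup g b))"
    using decomp[of f] decomp[of g] by simp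
  also have "\<dots> = (\<Sum>a\<in>Poly_Mapping.keys f. \<Sum>b\<in>Poly_Mapping.keys g.
     Poly_Mapping.single (a + b) (Poly_Mapping.lookup f a * Poly_Mapping.lookup g b))"
    by (simp add: sum_product mult_single)
  finally have "eval_poly (f * g) P = (\<Sum>a\<in>Poly_Mapping.keys f. \<Sum>b\<in>Poly_Mapping.keys g.
     Poly_Mapping.lookup f a * Poly_Mapping.lookup g b * mon P (a + b))"
    by (simp add: eval_sum eval_single)
  also have "\<dots> = eval_poly f P * eval_poly g P"
    by (simp add: eval_mon mon_add sum_product ac_simps)
  finally show ?thesis .
qed

lemma polys_iff: "0 \<in> A \<Longrightarrow> f \<in> polys A n \<longleftrightarrow>
  (\<forall>m. Poly_Mapping.lookup f m \<in> A) \<and> (\<forall>m\<in>Poly_Mapping.keys f. Poly_Mapping.keys m \<subseteq> {..<n})"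
  unfolding polys_def by (auto simp: in_keys_iff)

lemma polys_add: assumes "subsemiring A" "f \<in> polys A n" "g \<in> polys A n"
  shows "f + g \<in> polys A n"
proof -
  have 0: "0 \<in> A" using assms(1) by (simp add: subsemiring_def)
  have "\<forall>m. Poly_Mapping.lookup (f+g) m \<in> A"
    using assms unfolding polys_iff[OF 0] by (auto simp: lookup_add subsemiring_def)
  moreover have "\<forall>m\<in>Poly_Mapping.keys (f+g). Poly_Mapping.keys m \<subseteq> {..<n}"
  proof
    fix m assume "m \<in> Poly_Mapping.keys (f+g)"
    then have "m \<in> Poly_Mapping.keys f \<or> m \<in> Poly_Mapping.keys g" using keys_add[of f g] by blast
    then show "Poly_Mapping.keys m \<subseteq> {..<n}" using assms unfolding polys_iff[OF 0] by blast
  qed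
  ultimately show ?thesis unfolding polys_iff[OF 0] by blast
qed

lemma polys_zero: "polys A n \<noteq> {} \<Longrightarrow> 0 \<in> polys A n"
  by (simp add: polys_def)

lemma polys_sum: assumes "subsemiring A" "\<And>x. x \<in> S \<Longrightarrow> F x \<in> polys A n"
  shows "sum F S \<in> polys A n"
  using assms(2)
proof (induction S rule: infinite_finite_induct)
  case (infinite S) then show ?case by (simp add: polys_def)
next
  case empty then show ?case by (simp add: polys_def)
next
  case (insert x F) then show ?case by (simp add: polys_add[OF assms(1)])
qed

lemma polys_single: assumes "c \<in> A" "Poly_Mapping.keys m \<subseteq> {..<n}"
  shows "Poly_Mapping.single m c \<in> polys A n"
  using assms by (simp add: polys_def)

lemma polys_mult: assumes A: "subsemiring A" and f: "f \<in> polys A n" and g: "g \<in> polys A n"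
  shows "f * g \<in> polys A n"
proof -
  have "f * g = (\<Sum>a\<in>Poly_Mapping.keys f. Poly_Mapping.single a (Poly_Mapping.lookup f a)) *
     (\<Sum>b\<in>Poly_Mapping.keys g. Poly_Mapping.single b (Poly_Mapping.lookup g b))"
    using decomp[of f] decomp[of g] by simp
  also have "\<dots> = (\<Sum>a\<in>Poly_Mapping.keys f. \<Sum>b\<in>Poly_Mapping.keys g.
     Poly_Mapping.single (a + b) (Poly_Mapping.lookup f a * Poly_Mapping.lookup g b))"
    by (simp add: sum_product mult_single)
  also have "\<dots> \<in> polys A n"
  proof (intro polys_sum[OF A] polys_single)
    fix a b assume a: "a \<in> Poly_Mapping.keys f" and b: "b \<in> Poly_Mapping.keys g"
    show "Poly_Mapping.lookup f a * Poly_Mapping.lookup g b \<in> A"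
      using a b f g A by (simp add: polys_def subsemiring_def)
    show "Poly_Mapping.keys (a + b) \<subseteq> {..<n}"
      using a b f g keys_add[of a b] unfolding polys_def by blast
  qed
  finally show ?thesis .
qed

lemma cong_facts:
  assumes "semiring_congruence \<rho>"
  shows "(a,a) \<in> \<rho>" "(a,b) \<in> \<rho> \<Longrightarrow> (b,a) \<in> \<rho>"
    "(a,b) \<in> \<rho> \<Longrightarrow> (b,c) \<in> \<rho> \<Longrightarrow> (a,c) \<in> \<rho>"
    "(a,b) \<in> \<rho> \<Longrightarrow> (c,d) \<in> \<rho> \<Longrightarrow> (a+c,b+d) \<in> \<rho>"
    "(a,b) \<in> \<rho> \<Longrightarrow> (c,d) \<in> \<rho> \<Longrightarrow> (a*c,b*d) \<in> \<rho>"
  using assms unfolding semiring_congruence_def equiv_def refl_on_def sym_def trans_def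
  by blast+

lemma twist_left:
  assumes "semiring_congruence \<rho>" "(a,b) \<in> \<rho>"
  shows "(a*c+b*d, a*d+b*c) \<in> \<rho>"
proof -
  have 1: "(a*c, b*c) \<in> \<rho>" by (rule cong_facts(5)[OF assms(1) assms(2) cong_facts(1)[OF assms(1)]])
  have 2: "(b*d, a*d) \<in> \<rho>" by (rule cong_facts(5)[OF assms(1) cong_facts(2)[OF assms(1) assms(2)] cong_facts(1)[OF assms(1)]])
  have "(a*c+b*d, b*c+a*d) \<in> \<rho>" using cong_facts(4)[OF assms(1) 1 2] .
  then show ?thesis by (simp add: add.commute)
qed

lemma twist_right:
  assumes "semiring_congruence \<rho>" "(c,d) \<in> \<rho>"
  shows "(a*c+b*d, a*d+b*c) \<in> \<rho>"
  using twist_left[OF assms, of a b] by (simp add: ac_simps)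

theorem theorem3p4:
  fixes A :: "'b::comm_semiring_1 set" and \<rho> :: "('b \<times> 'b) set" and n :: nat
  assumes "subsemiring A" and "prime_congruence \<rho>"
  shows "(\<forall>Y1 Y2. rho_variety A \<rho> n Y1 \<longrightarrow> rho_variety A \<rho> n Y2 \<longrightarrow> rho_variety A \<rho> n (Y1 \<union> Y2))
    \<and> (\<forall>F. (\<forall>Y\<in>F. rho_variety A \<rho> n Y) \<longrightarrow> rho_variety A \<rho> n (points n \<inter> \<Inter> F))
    \<and> rho_variety A \<rho> n {}
    \<and> rho_variety A \<rho> n (points n)"
proof -
  have SA: "subsemiring A" by fact
  have C: "semiring_congruence \<rho>" and NU: "\<rho> \<noteq> UNIV"
    and PR: "\<And>p q. twisted_prod p q \<in> \<rho> \<Longrightarrow> p \<in> \<rho> \<or> q \<in> \<rho>"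
    using assms(2) unfolding prime_congruence_def by blast+
  have 0: "0 \<in> A" and 1: "1 \<in> A" using SA by (auto simp: subsemiring_def)
  have p0: "(0::'b mpoly) \<in> polys A n" by (simp add: polys_def)
  have p1: "(1::'b mpoly) \<in> polys A n"
    using polys_single[OF 1, of 0 n] by simp
  have ev0: "eval_poly 0 P = 0" for P :: "nat \<Rightarrow> 'b" by (rule eval_zero)
  have ev1: "eval_poly 1 P = 1" for P :: "nat \<Rightarrow> 'b"
    using eval_single[of 0 "1::'b" P] by (simp add: mon_def)
  have pts: "rho_variety A \<rho> n (points n)"
    unfolding rho_variety_def
  proof (intro exI[of _ "{(0,0)}"] conjI)
    show "points n = Z_rho \<rho> n {(0, 0)}"
      unfolding Z_rho_def using cong_facts(1)[OF C] by (auto simp: ev0)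
  qed (use p0 in auto)
  have emp: "rho_variety A \<rho> n {}"
    unfolding rho_variety_def
  proof (intro exI[of _ "{(1,0)}"] conjI)
    have "(1::'b, 0) \<notin> \<rho>"
    proof
      assume h: "(1::'b, 0) \<in> \<rho>"
      have "(a, b) \<in> \<rho>" for a b :: 'b
      proof -
        have "(a*1, a*0) \<in> \<rho>" "(b*1, b*0) \<in> \<rho>"
          using cong_facts(5)[OF C cong_facts(1)[OF C] h] by blast+
        then have "(a,0) \<in> \<rho>" "(0,b) \<in> \<rho>" using cong_facts(2)[OF C] by auto
        then show ?thesis using cong_facts(3)[OF C] by blast
      qed
      then show False using NU by auto
    qed
    then show "{} = Z_rho \<rho> n {(1, 0)}"
      unfolding Z_rho_def by (auto simp: ev0 ev1)
  qed (use p0 p1 in auto)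
  have inter: "rho_variety A \<rho> n (points n \<inter> \<Inter> F)" if hF: "\<forall>Y\<in>F. rho_variety A \<rho> n Y" for F
  proof (cases "F = {}")
    case True then show ?thesis using pts by simp
  next
    case False
    from hF obtain T where T: "\<forall>Y\<in>F. T Y \<noteq> {} \<and> T Y \<subseteq> polys A n \<times> polys A n \<and> Y = Z_rho \<rho> n (T Y)"
      unfolding rho_variety_def by metis
    show ?thesis unfolding rho_variety_def
    proof (intro exI[of _ "\<Union>Y\<in>F. T Y"] conjI)
      show "(\<Union>Y\<in>F. T Y) \<noteq> {}" using T False by auto
      show "(\<Union>Y\<in>F. T Y) \<subseteq> polys A n \<times> polys A n" using T by blast
      show "points n \<inter> \<Inter> F = Z_rho \<rho> n (\<Union>Y\<in>F. T Y)"
      proof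
        show "points n \<inter> \<Inter> F \<subseteq> Z_rho \<rho> n (\<Union>Y\<in>F. T Y)"
        proof
          fix P assume "P \<in> points n \<inter> \<Inter> F"
          then have "P \<in> points n" "\<forall>Y\<in>F. P \<in> Z_rho \<rho> n (T Y)" using T by auto
          then show "P \<in> Z_rho \<rho> n (\<Union>Y\<in>F. T Y)" unfolding Z_rho_def by blast
        qed
        show "Z_rho \<rho> n (\<Union>Y\<in>F. T Y) \<subseteq> points n \<inter> \<Inter> F"
        proof
          fix P assume P: "P \<in> Z_rho \<rho> n (\<Union>Y\<in>F. T Y)"
          then have "\<forall>Y\<in>F. P \<in> Z_rho \<rho> n (T Y)" unfolding Z_rho_def by blast
          then have "\<forall>Y\<in>F. P \<in> Y" using T by auto
          moreover have "P \<in> points n" using P unfolding Z_rho_def by blast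
          ultimately show "P \<in> points n \<inter> \<Inter> F" by blast
        qed
      qed
    qed
  qed
  have un: "rho_variety A \<rho> n (Y1 \<union> Y2)" if h1: "rho_variety A \<rho> n Y1" and h2: "rho_variety A \<rho> n Y2" for Y1 Y2
  proof -
    obtain T1 where T1: "T1 \<noteq> {}" "T1 \<subseteq> polys A n \<times> polys A n" "Y1 = Z_rho \<rho> n T1"
      using h1 unfolding rho_variety_def by blast
    obtain T2 where T2: "T2 \<noteq> {}" "T2 \<subseteq> polys A n \<times> polys A n" "Y2 = Z_rho \<rho> n T2"
      using h2 unfolding rho_variety_def by blast
    define tw :: "('b mpoly \<times> 'b mpoly) \<times> ('b mpoly \<times> 'b mpoly) \<Rightarrow> 'b mpoly \<times> 'b mpoly" where
      "tw = (\<lambda>((f1,g1),(f2,g2)). (f1*f2+g1*g2, f1*g2+g1*f2))"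
    define T where "T = tw ` (T1 \<times> T2)"
    have evtw: "(eval_poly (fst (tw ((f1,g1),(f2,g2)))) P, eval_poly (snd (tw ((f1,g1),(f2,g2)))) P)
       = twisted_prod (eval_poly f1 P, eval_poly g1 P) (eval_poly f2 P, eval_poly g2 P)" for f1 g1 f2 g2 P
      by (simp add: tw_def twisted_prod_def eval_add eval_mult)
    show ?thesis unfolding rho_variety_def
    proof (intro exI[of _ T] conjI)
      show "T \<noteq> {}" using T1 T2 by (simp add: T_def)
      show "T \<subseteq> polys A n \<times> polys A n"
        using T1(2) T2(2) unfolding T_def tw_def
        by (auto intro!: polys_add[OF SA] polys_mult[OF SA])
      show "Y1 \<union> Y2 = Z_rho \<rho> n T"
      proof
        show "Y1 \<union> Y2 \<subseteq> Z_rho \<rho> n T"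
        proof
          fix P assume "P \<in> Y1 \<union> Y2"
          then consider "P \<in> Z_rho \<rho> n T1" | "P \<in> Z_rho \<rho> n T2" using T1 T2 by blast
          then show "P \<in> Z_rho \<rho> n T"
          proof cases
            case 1
            have "(eval_poly f P, eval_poly g P) \<in> \<rho>" if fg: "(f,g) \<in> T" for f g
            proof -
              obtain f1 g1 f2 g2 where e: "(f,g) = tw ((f1,g1),(f2,g2))" "(f1,g1) \<in> T1"
                using fg unfolding T_def by auto
              have "(eval_poly f1 P, eval_poly g1 P) \<in> \<rho>" using 1 e(2) unfolding Z_rho_def by blast
              then have "twisted_prod (eval_poly f1 P, eval_poly g1 P) (eval_poly f2 P, eval_poly g2 P) \<in> \<rho>"
                unfolding twisted_prod_def fst_conv snd_conv by (rule twist_left[OF C])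
              then show ?thesis using evtw[of f1 g1 f2 g2 P] e(1) by (metis fst_conv snd_conv)
            qed
            moreover have "P \<in> points n" using 1 unfolding Z_rho_def by blast
            ultimately show ?thesis unfolding Z_rho_def by blast
          next
            case 2
            have "(eval_poly f P, eval_poly g P) \<in> \<rho>" if fg: "(f,g) \<in> T" for f g
            proof -
              obtain f1 g1 f2 g2 where e: "(f,g) = tw ((f1,g1),(f2,g2))" "(f2,g2) \<in> T2"
                using fg unfolding T_def by auto
              have "(eval_poly f2 P, eval_poly g2 P) \<in> \<rho>" using 2 e(2) unfolding Z_rho_def by blast
              then have "twisted_prod (eval_poly f1 P, eval_poly g1 P) (eval_poly f2 P, eval_poly g2 P) \<in> \<rho>"
                unfolding twisted_prod_def fst_conv snd_conv by (rule twist_right[OF C])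
              then show ?thesis using evtw[of f1 g1 f2 g2 P] e(1) by (metis fst_conv snd_conv)
            qed
            moreover have "P \<in> points n" using 2 unfolding Z_rho_def by blast
            ultimately show ?thesis unfolding Z_rho_def by blast
          qed
        qed
        show "Z_rho \<rho> n T \<subseteq> Y1 \<union> Y2"
        proof (rule ccontr)
          assume "\<not> ?thesis"
          then obtain P where P: "P \<in> Z_rho \<rho> n T" "P \<notin> Z_rho \<rho> n T1" "P \<notin> Z_rho \<rho> n T2"
            using T1 T2 by blast
          have Pp: "P \<in> points n" using P(1) unfolding Z_rho_def by blast
          obtain f1 g1 where a: "(f1,g1) \<in> T1" "(eval_poly f1 P, eval_poly g1 P) \<notin> \<rho>"
            using P(2) Pp unfolding Z_rho_def by blast
          obtain f2 g2 where b: "(f2,g2) \<in> T2" "(eval_poly f2 P, eval_poly g2 P) \<notin> \<rho>"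
            using P(3) Pp unfolding Z_rho_def by blast
          have "tw ((f1,g1),(f2,g2)) \<in> T" using a b by (simp add: T_def)
          then have "(eval_poly (fst (tw ((f1,g1),(f2,g2)))) P, eval_poly (snd (tw ((f1,g1),(f2,g2)))) P) \<in> \<rho>"
            using P(1) unfolding Z_rho_def by (cases "tw ((f1,g1),(f2,g2))") auto
          then have "twisted_prod (eval_poly f1 P, eval_poly g1 P) (eval_poly f2 P, eval_poly g2 P) \<in> \<rho>" by (simp only: evtw)
          then show False using PR a(2) b(2) by blast
        qed
      qed
    qed
  qed
  show ?thesis using un inter emp pts by blast
qed

end
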